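(* Let $\widehat{\mathbf M}\otimes\mathcal A_\psi$ be the product of a gMDP $\widehat{\mathbf M}$ (state space $\hat{\mathbb X}$, input space $\hat{\mathbb U}$) with the DFA $\mathcal A_\psi=(Q,q_0,\Sigma,F,\tau)$, let $\delta\ge 0$, let $\mu$ be a stationary Markov policy, and let $I$ be an absorbing set for $\mu$. Then every function $V:\hat{\mathbb X}\times Q\to[0,1]$ satisfies, for all integers $l\ge1$, $$0\le(\mathbf T^\mu_\delta)^l(V)(\hat x,q)\le\mathbf L(\|V\|_\infty-l\delta)\qquad\forall(\hat x,q)\in I.$$ In particular, if $\delta>0$ then $(\mathbf T^\mu_\delta)^l(V)(\hat x,q)=0$ for all $(\hat x,q)\in I$ and all $l\ge1/\delta$.
   Context: A gMDP $\widehat{\mathbf M}=(\hat{\mathbb X},\hat{\mathbb U},\mathbb Y,\hat x_0,\hat{\mathbf t},\hat h)$: Polish state/input spaces, metric output space $\mathbb Y$, kernel $\hat{\mathbf t}(\cdot\mid\hat x,\hat u)$, measurable output map $\hat h$. $\Sigma=2^{\mathsf{AP}}$, $\mathsf L:\mathbb Y\to\Sigma$ measurable labelling; $\mathcal A_\psi$ a DFA (accepting set $F$, transition $\tau$) for an scLTL formula $\psi$. Product $\widehat{\mathbf M}\otimes\mathcal A_\psi$: states $\hat{\mathbb X}\times Q$, inputs $\hat{\mathbb U}$, kernel $\bar{\mathbf t}(d\hat x'\times\{q'\}\mid\hat x,q,u)=\mathbf 1_{\{q'\}}(\tau(q,\mathsf L(\hat h(\hat x'))))\hat{\mathbf t}(d\hat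 x'\mid\hat x,u)$. Stationary Markov policy: universally measurable $\mu:\hat{\mathbb X}\times Q\to\mathcal P(\hat{\mathbb U})$ used at every step. $\mathbf T^\mu(V)(\hat x,q)=\int\max\{\mathbf 1_F(q'),V(\hat x',q')\}\bar{\mathbf t}(d\hat x'\times\{q'\}\mid\hat x,q,\mu(\hat x,q))$, $\mathbf T^\mu_\delta(V)=\mathbf L(\mathbf T^\mu(V)-\delta)$ with $\mathbf L(r)=\min(1,\max(0,r))$; $\|V\|_\infty=\sup|V|$. An absorbing set for $\mu$ is $I\subseteq\hat{\mathbb X}\times(Q\setminus F)$ such that, under $\mu$, $\mathbb P[(\hat x_{t+1},q_{t+1})\in I\mid(\hat x_t,q_t)]=1$ for all $(\hat x_t,q_t)\in I$. *)

theory Defs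
  imports "HOL-Probability.Probability"
begin

definition prod_space :: "('x::topological_space \<times> 'q) measure" where
  "prod_space = borel \<Otimes>\<^sub>M count_space UNIV"

definition universal_completion :: "'a measure \<Rightarrow> 'a measure" where
  "universal_completion M = measure_of (space M)
     (\<Inter>P\<in>{P. prob_space P \<and> sets P = sets M}. sets (completion P)) (\<lambda>_. 0)"

definition stationary_markov_policy :: "('x::topological_space \<times> 'q \<Rightarrow> 'u::topological_space measure) \<Rightarrow> bool" where
  "stationary_markov_policy \<mu> \<longleftrightarrow>
     \<mu> \<in> universal_completion prod_space \<rightarrow>\<^sub>M prob_algebra borel"

definition prod_kernel ::
  "('x::topological_space \<Rightarrow> 'u \<Rightarrow> 'x measure) \<Rightarrow> ('x \<Rightarrow> 'y) \<Rightarrow> ('y \<Rightarrow> 'ap set)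
   \<Rightarrow> ('q \<Rightarrow> 'ap set \<Rightarrow> 'q) \<Rightarrow> ('x \<times> 'q \<Rightarrow> 'u measure) \<Rightarrow> 'x \<times> 'q \<Rightarrow> ('x \<times> 'q) measure" where
  "prod_kernel t h L \<tau> \<mu> s =
     \<mu> s \<bind> (\<lambda>u. distr (t (fst s) u) prod_space (\<lambda>x'. (x', \<tau> (snd s) (L (h x')))))"

definition T_op ::
  "('x::topological_space \<Rightarrow> 'u \<Rightarrow> 'x measure) \<Rightarrow> ('x \<Rightarrow> 'y) \<Rightarrow> ('y \<Rightarrow> 'ap set)
   \<Rightarrow> ('q \<Rightarrow> 'ap set \<Rightarrow> 'q) \<Rightarrow> 'q set \<Rightarrow> ('x \<times> 'q \<Rightarrow> 'u measure)
   \<Rightarrow> ('x \<times> 'q \<Rightarrow> real) \<Rightarrow> 'x \<times> 'q \<Rightarrow> real" where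
  "T_op t h L \<tau> F \<mu> V s =
     (\<integral>y. max (indicator F (snd y)) (V y) \<partial>(prod_kernel t h L \<tau> \<mu> s))"

definition clip01 :: "real \<Rightarrow> real" where
  "clip01 r = min 1 (max 0 r)"

definition T_delta ::
  "('x::topological_space \<Rightarrow> 'u \<Rightarrow> 'x measure) \<Rightarrow> ('x \<Rightarrow> 'y) \<Rightarrow> ('y \<Rightarrow> 'ap set)
   \<Rightarrow> ('q \<Rightarrow> 'ap set \<Rightarrow> 'q) \<Rightarrow> 'q set \<Rightarrow> ('x \<times> 'q \<Rightarrow> 'u measure) \<Rightarrow> real
   \<Rightarrow> ('x \<times> 'q \<Rightarrow> real) \<Rightarrow> 'x \<times> 'q \<Rightarrow> real" where
  "T_delta t h L \<tau> F \<mu> \<delta> V = (\<lambda>s. clip01 (T_op t h L \<tau> F \<mu> V s - \<delta>))"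

definition sup_norm :: "('a \<Rightarrow> real) \<Rightarrow> real" where
  "sup_norm V = (SUP s. \<bar>V s\<bar>)"

definition absorbing ::
  "('x::topological_space \<Rightarrow> 'u \<Rightarrow> 'x measure) \<Rightarrow> ('x \<Rightarrow> 'y) \<Rightarrow> ('y \<Rightarrow> 'ap set)
   \<Rightarrow> ('q \<Rightarrow> 'ap set \<Rightarrow> 'q) \<Rightarrow> 'q set \<Rightarrow> ('x \<times> 'q \<Rightarrow> 'u measure) \<Rightarrow> ('x \<times> 'q) set \<Rightarrow> bool" where
  "absorbing t h L \<tau> F \<mu> I \<longleftrightarrow>
     I \<subseteq> UNIV \<times> (- F) \<and>
     (\<forall>s\<in>I. AE y in prod_kernel t h L \<tau> \<mu> s. y \<in> I)"

end

theory Submission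
  imports Defs
begin

lemma kernel_prob:
  fixes t :: "'x::polish_space \<Rightarrow> 'u::polish_space \<Rightarrow> 'x measure"
    and h :: "'x \<Rightarrow> 'y::metric_space"
    and L :: "'y \<Rightarrow> 'ap set"
    and \<tau> :: "'q::finite \<Rightarrow> 'ap set \<Rightarrow> 'q"
    and \<mu> :: "'x \<times> 'q \<Rightarrow> 'u measure"
  assumes kernel: "(\<lambda>(x, u). t x u) \<in> borel \<rightarrow>\<^sub>M prob_algebra borel"
    and h_meas: "h \<in> borel_measurable borel"
    and L_meas: "L \<in> borel \<rightarrow>\<^sub>M count_space UNIV"
    and policy: "stationary_markov_policy \<mu>"
  shows "prob_space (prod_kernel t h L \<tau> \<mu> s)"
proof -
  have "s \<in> space (universal_completion prod_space)"
    by (simp add: universal_completion_def space_measure_of_conv prod_space_def space_pair_measure)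
  hence A: "\<mu> s \<in> space (prob_algebra borel)"
    using policy unfolding stationary_markov_policy_def by (rule measurable_space[rotated])
  have p: "(\<lambda>u. (fst s, u)) \<in> (borel :: 'u measure) \<rightarrow>\<^sub>M (borel :: ('x \<times> 'u) measure)"
    by (intro borel_measurable_continuous_onI continuous_intros)
  have tm: "(\<lambda>u. t (fst s) u) \<in> borel \<rightarrow>\<^sub>M prob_algebra borel"
    using measurable_comp[OF p kernel] by (simp add: o_def)
  have f: "(\<lambda>x'. (x', \<tau> (snd s) (L (h x')))) \<in> (borel :: 'x measure) \<rightarrow>\<^sub>M prod_space"
    unfolding prod_space_def
  proof (rule measurable_Pair)
    show "(\<lambda>x. x) \<in> borel \<rightarrow>\<^sub>M borel" by simp
    have "(\<lambda>x'. L (h x')) \<in> borel \<rightarrow>\<^sub>M count_space UNIV"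
      using measurable_comp[OF h_meas L_meas] by (simp add: o_def)
    then show "(\<lambda>x'. \<tau> (snd s) (L (h x'))) \<in> borel \<rightarrow>\<^sub>M count_space UNIV"
      by (rule measurable_compose) simp
  qed
  have B: "(\<lambda>u. distr (t (fst s) u) prod_space (\<lambda>x'. (x', \<tau> (snd s) (L (h x'))))) \<in> borel \<rightarrow>\<^sub>M prob_algebra prod_space"
    using measurable_comp[OF tm measurable_distr_prob_space[OF f]] by (simp add: o_def)
  show ?thesis unfolding prod_kernel_def by (rule prob_space_bind'[OF A B])
qed


lemma clip01_mono: "a \<le> b \<Longrightarrow> clip01 a \<le> clip01 b"
  by (simp add: clip01_def)

lemma clip01_range: "0 \<le> clip01 a \<and> clip01 a \<le> 1"
  by (simp add: clip01_def)

lemma T_op_le: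
  fixes W :: "'x::topological_space \<times> 'q \<Rightarrow> real"
  assumes P: "prob_space (prod_kernel t h L \<tau> \<mu> s)"
    and AE: "AE y in prod_kernel t h L \<tau> \<mu> s. y \<in> I"
    and IF: "I \<subseteq> UNIV \<times> (- F)"
    and W0: "\<And>y. 0 \<le> W y" and WI: "\<And>y. y \<in> I \<Longrightarrow> W y \<le> c" and c0: "0 \<le> c"
  shows "T_op t h L \<tau> F \<mu> W s \<le> c"
proof -
  let ?K = "prod_kernel t h L \<tau> \<mu> s"
  let ?g = "\<lambda>y. max (indicator F (snd y)) (W y) :: real"
  interpret prob_space ?K by (rule P)
  show ?thesis
  proof (cases "integrable ?K ?g")
    case True
    have "AE y in ?K. ?g y \<le> c"
      using AE
    proof eventually_elim
      case (elim y)
      then have "snd y \<notin> F" using IF by auto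
      then show ?case using WI[OF elim] c0 by (simp add: indicator_def)
    qed
    then have "integral\<^sup>L ?K ?g \<le> integral\<^sup>L ?K (\<lambda>_. c)"
      by (intro integral_mono_AE True) auto
    also have "\<dots> = c" by (simp add: prob_space)
    finally show ?thesis by (simp add: T_op_def)
  next
    case False
    then show ?thesis using c0 by (simp add: T_op_def not_integrable_integral_eq)
  qed
qed

theorem proposition7:
  fixes t :: "'x::polish_space \<Rightarrow> 'u::polish_space \<Rightarrow> 'x measure"
    and h :: "'x \<Rightarrow> 'y::metric_space"
    and L :: "'y \<Rightarrow> 'ap set"
    and \<tau> :: "'q::finite \<Rightarrow> 'ap set \<Rightarrow> 'q"
    and F :: "'q set"
    and \<mu> :: "'x \<times> 'q \<Rightarrow> 'u measure"
    and \<delta> :: real and I :: "('x \<times> 'q) set"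
  assumes kernel: "(\<lambda>(x, u). t x u) \<in> borel \<rightarrow>\<^sub>M prob_algebra borel"
    and h_meas: "h \<in> borel_measurable borel"
    and L_meas: "L \<in> borel \<rightarrow>\<^sub>M count_space UNIV"
    and delta: "\<delta> \<ge> 0"
    and policy: "stationary_markov_policy \<mu>"
    and absorb: "absorbing t h L \<tau> F \<mu> I"
  shows "\<forall>V :: 'x \<times> 'q \<Rightarrow> real. (\<forall>s. V s \<in> {0..1}) \<longrightarrow>
           (\<forall>l::nat. l \<ge> 1 \<longrightarrow> (\<forall>s\<in>I.
              0 \<le> (T_delta t h L \<tau> F \<mu> \<delta> ^^ l) V s \<and>
              (T_delta t h L \<tau> F \<mu> \<delta> ^^ l) V s \<le> clip01 (sup_norm V - real l * \<delta>)))
           \<and> (\<delta> > 0 \<longrightarrow> (\<forall>l::nat. l \<ge> 1 \<and> real l \<ge> 1 / \<delta> \<longrightarrow>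
              (\<forall>s\<in>I. (T_delta t h L \<tau> F \<mu> \<delta> ^^ l) V s = 0)))"
  proof (intro allI impI)
  fix V :: "'x \<times> 'q \<Rightarrow> real"
  assume V: "\<forall>s. V s \<in> {0..1}"
  let ?T = "T_delta t h L \<tau> F \<mu> \<delta>"
  define M where "M = sup_norm V"
  have bdd: "bdd_above (range (\<lambda>s. \<bar>V s\<bar>))"
    using V by (intro bdd_aboveI[where M=1]) auto
  have VM: "V s \<le> M" for s
  proof -
    have "\<bar>V s\<bar> \<le> M" unfolding M_def sup_norm_def by (rule cSUP_upper[OF _ bdd]) simp
    then show ?thesis by simp
  qed
  have M1: "M \<le> 1" unfolding M_def sup_norm_def
    using V by (intro cSUP_least) auto
  have IF: "I \<subseteq> UNIV \<times> (- F)" and AEI: "\<And>s. s \<in> I \<Longrightarrow> AE y in prod_kernel t h L \<tau> \<mu> s. y \<in> I"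
    using absorb unfolding absorbing_def by auto
  have P: "\<And>s. prob_space (prod_kernel t h L \<tau> \<mu> s)"
    by (rule kernel_prob[OF kernel h_meas L_meas policy])
  have nonneg: "\<And>l s. 0 \<le> (?T ^^ l) V s"
  proof -
    fix l s show "0 \<le> (?T ^^ l) V s"
      using V[rule_format, of s] clip01_range by (cases l) (auto simp: T_delta_def)
  qed
  have main: "\<forall>s\<in>I. (?T ^^ l) V s \<le> clip01 (M - real l * \<delta>)" for l
  proof (induction l)
    case 0
    show ?case
    proof
      fix s assume "s \<in> I"
      have "V s \<le> M" "V s \<le> 1" using VM V[rule_format, of s] by auto
      then show "(?T ^^ 0) V s \<le> clip01 (M - real 0 * \<delta>)" by (simp add: clip01_def)
    qed
  next
    case (Suc l)
    show ?case
    proof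
      fix s assume s: "s \<in> I"
      let ?c = "clip01 (M - real l * \<delta>)"
      have "T_op t h L \<tau> F \<mu> ((?T ^^ l) V) s \<le> ?c"
        by (rule T_op_le[OF P AEI[OF s] IF nonneg]) (use Suc clip01_range in auto)
      then have "(?T ^^ Suc l) V s \<le> clip01 (?c - \<delta>)"
        by (simp add: T_delta_def clip01_mono)
      also have "\<dots> \<le> clip01 (M - real (Suc l) * \<delta>)"
        using delta by (auto simp: clip01_def algebra_simps min_def max_def)
      finally show "(?T ^^ Suc l) V s \<le> clip01 (M - real (Suc l) * \<delta>)" .
    qed
  qed
  show "(\<forall>l::nat. l \<ge> 1 \<longrightarrow> (\<forall>s\<in>I.
              0 \<le> (?T ^^ l) V s \<and> (?T ^^ l) V s \<le> clip01 (sup_norm V - real l * \<delta>)))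
           \<and> (\<delta> > 0 \<longrightarrow> (\<forall>l::nat. l \<ge> 1 \<and> real l \<ge> 1 / \<delta> \<longrightarrow>
              (\<forall>s\<in>I. (?T ^^ l) V s = 0)))"
  proof (rule conjI; intro allI impI ballI)
    fix l :: nat and s assume "1 \<le> l" "s \<in> I"
    then show "0 \<le> (?T ^^ l) V s \<and> (?T ^^ l) V s \<le> clip01 (sup_norm V - real l * \<delta>)"
      using main nonneg M_def by auto
  next
    fix l :: nat and s assume d: "0 < \<delta>" and l: "1 \<le> l \<and> 1 / \<delta> \<le> real l" and s: "s \<in> I"
    have "1 \<le> real l * \<delta>" using l d by (simp add: field_simps)
    then have "clip01 (M - real l * \<delta>) = 0" using M1 by (simp add: clip01_def)
    then show "(?T ^^ l) V s = 0" using main[of l] nonneg[of l s] s by (auto intro: antisym)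
  qed
qed

end
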